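(* Let $f$ be analytic on $\mathbb{D}$. Then for every positive integer $n$, \[ \frac{|f^{(n)}(0)|}{n!}\le \frac12\operatorname{Diam} f(\mathbb{D}). \] Moreover, equality holds for some $n$ if and only if $f(z)=f(0)+cz^n$ for some constant $c$ with $|c|=\operatorname{Diam} f(\mathbb{D})/2$.
   Context: $\mathbb{D}$ is the open unit disk; $\operatorname{Diam}E=\sup_{z,w\in E}|z-w|$ (possibly $+\infty$). *)

theory Defs
  imports "HOL-Complex_Analysis.Complex_Analysis" "HOL-Library.Extended_Real"
begin

definition Diam :: "complex set \<Rightarrow> ereal" where
  "Diam E = (SUP z\<in>E. SUP w\<in>E. ereal (cmod (z - w)))"

end

theory Submission imports Defs begin

definition cf :: "(complex \<Rightarrow> complex) \<Rightarrow> nat \<Rightarrow> complex" where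
  "cf h k = (deriv ^^ k) h 0 / fact k"

lemma real_lim_le:
  fixes x M a :: real
  assumes "0 \<le> a" "a < 1" "\<And>r. a < r \<Longrightarrow> r < 1 \<Longrightarrow> x * r ^ N \<le> M"
  shows "x \<le> M"
proof -
  have "((\<lambda>r. x * r ^ N) \<longlongrightarrow> x * 1 ^ N) (at_left (1::real))"
    by (intro tendsto_intros)
  moreover have "eventually (\<lambda>r. x * r ^ N \<le> M) (at_left (1::real))"
  proof -
    have "eventually (\<lambda>r. a < r \<and> r < (1::real)) (at_left 1)"
      using eventually_at_left_real[OF assms(2)] by (simp add: eventually_mono)
    then show ?thesis by eventually_elim (use assms(3) in auto)
  qed
  ultimately have "x * 1 ^ N \<le> M"
    by (intro tendsto_upperbound) (auto simp: trivial_limit_at_left_real)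
  then show ?thesis by simp
qed

lemma cauchy_bound:
  assumes hol: "h holomorphic_on ball 0 1" and bd: "\<And>z. z \<in> ball 0 1 \<Longrightarrow> cmod (h z) \<le> M"
  shows "cmod ((deriv ^^ k) h 0) \<le> fact k * M"
proof (rule real_lim_le[of 0 _ k])
  fix r :: real assume r: "0 < r" "r < 1"
  have "cmod ((deriv ^^ k) h 0) \<le> fact k * M / r ^ k"
  proof (rule Cauchy_inequality)
    show "h holomorphic_on ball 0 r" by (rule holomorphic_on_subset[OF hol]) (use r in auto)
    show "continuous_on (cball 0 r) h"
      using r by (intro holomorphic_on_imp_continuous_on holomorphic_on_subset[OF hol]) auto
    show "0 < r" by fact
    fix x :: complex assume "cmod (0 - x) = r"
    then show "cmod (h x) \<le> M" using r by (intro bd) auto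
  qed
  then show "cmod ((deriv ^^ k) h 0) * r ^ k \<le> fact k * M"
    using r by (simp add: field_simps)
qed auto

lemma schwarz_gen:
  assumes hol: "s holomorphic_on ball 0 1"
    and bd: "\<And>z. z \<in> ball 0 1 \<Longrightarrow> cmod (z ^ N * s z) \<le> M"
    and xi: "\<xi> \<in> ball 0 1"
  shows "cmod (s \<xi>) \<le> M"
proof (rule real_lim_le[of "cmod \<xi>" _ N])
  show "0 \<le> cmod \<xi>" "cmod \<xi> < 1" using xi by auto
  fix r :: real assume r: "cmod \<xi> < r" "r < 1"
  have r0: "0 < r" using r by (meson le_less_trans norm_ge_zero)
  have "cmod (s \<xi>) \<le> M / r ^ N"
  proof (rule maximum_modulus_frontier[of s "cball 0 r"])
    show "s holomorphic_on interior (cball 0 r)"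
      using r by (auto intro: holomorphic_on_subset[OF hol])
    show "continuous_on (closure (cball 0 r)) s"
      using r by (auto intro!: holomorphic_on_imp_continuous_on holomorphic_on_subset[OF hol])
    show "bounded (cball (0::complex) r)" by simp
    show "\<xi> \<in> cball 0 r" using r by auto
    fix z :: complex assume "z \<in> frontier (cball 0 r)"
    then have z: "cmod z = r" using r0 by (simp add: frontier_cball)
    then have "cmod (z ^ N * s z) \<le> M" using r by (intro bd) auto
    then have "r ^ N * cmod (s z) \<le> M" by (simp add: norm_mult norm_power z)
    then show "cmod (s z) \<le> M / r ^ N" using r0 by (simp add: field_simps mult.commute)
  qed
  then show "cmod (s \<xi>) * r ^ N \<le> M" using r0 by (simp add: field_simps)
qed

lemma max_mod_const:
  assumes hol: "h holomorphic_on ball 0 1" and bd: "\<And>z. z \<in> ball 0 1 \<Longrightarrow> cmod (h z) \<le> cmod (h 0)"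
  shows "\<And>z. z \<in> ball 0 1 \<Longrightarrow> h z = h 0"
proof -
  have "h constant_on ball 0 1"
    by (rule maximum_modulus_principle[of h "ball 0 1" "ball 0 1" 0]) (use hol bd in auto)
  then obtain c where "\<And>z. z \<in> ball 0 1 \<Longrightarrow> h z = c" by (auto simp: constant_on_def)
  then show "\<And>z. z \<in> ball 0 1 \<Longrightarrow> h z = h 0" by (metis centre_in_ball zero_less_one)
qed

lemma factor_lemma:
  assumes hol: "h holomorphic_on ball 0 1" and z: "\<And>j. j < N \<Longrightarrow> (deriv ^^ j) h 0 = 0"
  shows "\<exists>\<rho>. \<rho> holomorphic_on ball 0 1 \<and> (\<forall>z\<in>ball 0 1. h z = z ^ N * \<rho> z)
            \<and> (\<forall>j. cf \<rho> j = cf h (j + N))"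
proof -
  define F where "F = fps_expansion h 0"
  have hol': "h holomorphic_on eball 0 (ereal 1)" using hol by simp
  have rad: "fps_conv_radius F \<ge> ereal 1"
    unfolding F_def by (rule conv_radius_fps_expansion[OF hol'])
  define G where "G = fps_shift N F"
  have radG: "fps_conv_radius G \<ge> ereal 1" using rad by (simp add: G_def)
  have FG: "F = G * fps_X ^ N"
  proof (rule fps_ext)
    fix k
    show "F $ k = (G * fps_X ^ N) $ k"
      by (cases "k < N") (auto simp: G_def fps_X_power_mult_right_nth F_def fps_expansion_def z)
  qed
  have sub: "ball (0::complex) 1 \<subseteq> eball 0 (fps_conv_radius G)"
  proof
    fix z :: complex assume "z \<in> ball 0 1"
    then have "ereal (cmod z) < ereal 1" by simp
    also note radG
    finally show "z \<in> eball 0 (fps_conv_radius G)" by simp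
  qed
  show ?thesis
  proof (intro exI conjI ballI allI)
    show "eval_fps G holomorphic_on ball 0 1" by (intro holomorphic_on_eval_fps sub)
    fix z :: complex assume zb: "z \<in> ball 0 1"
    then have zr: "ereal (norm z) < fps_conv_radius G" using sub by auto
    have "h z = eval_fps F z"
      using eval_fps_expansion'[OF hol', of z] zb by (simp add: F_def)
    also have "\<dots> = eval_fps G z * z ^ N"
      unfolding FG using zr by (subst eval_fps_mult) auto
    finally show "h z = z ^ N * eval_fps G z" by simp
  next
    fix j
    have "(0::ereal) < ereal 1" by simp
    then have "0 < fps_conv_radius G" using radG by (rule order.strict_trans2)
    then have "eval_fps G has_fps_expansion G" by (rule eval_fps_has_fps_expansion)
    then have "fps_nth G j = (deriv ^^ j) (eval_fps G) 0 / fact j" by (rule fps_nth_fps_expansion)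
    then show "cf (eval_fps G) j = cf h (j + N)"
      by (simp add: cf_def G_def F_def fps_expansion_def)
  qed
qed

lemma hol_scale:
  assumes hol: "h holomorphic_on ball 0 1" and u: "cmod u = 1"
  shows "(\<lambda>z. h (u * z)) holomorphic_on ball 0 1"
proof -
  have "(h \<circ> (\<lambda>z. u * z)) holomorphic_on ball 0 1"
  proof (rule holomorphic_on_compose_gen[OF _ hol])
    show "(\<lambda>z. u * z) holomorphic_on ball 0 1" by (intro holomorphic_intros)
    show "(\<lambda>z. u * z) ` ball 0 1 \<subseteq> ball 0 1" using u by (auto simp: norm_mult)
  qed
  then show ?thesis by (simp add: o_def)
qed

lemma cf_scale:
  assumes hol: "h holomorphic_on ball 0 1" and u: "cmod u = 1"
  shows "cf (\<lambda>z. h (u * z)) k = u ^ k * cf h k"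
proof -
  have "(deriv ^^ k) (\<lambda>w. h (u * w)) 0 = u ^ k * (deriv ^^ k) h (u * 0)"
    by (rule higher_deriv_compose_linear[OF hol, where S="ball 0 1"]) (use u in \<open>auto simp: norm_mult\<close>)
  then show ?thesis by (simp add: cf_def)
qed

lemma cf_diff:
  assumes "f holomorphic_on ball 0 1" "g holomorphic_on ball 0 1"
  shows "cf (\<lambda>z. f z - g z) k = cf f k - cf g k"
  using higher_deriv_diff[OF assms, of 0 k] by (simp add: cf_def diff_divide_distrib)

lemma cf_cmult:
  assumes "f holomorphic_on ball 0 1"
  shows "cf (\<lambda>z. c * f z) k = c * cf f k"
  using higher_deriv_cmult[OF assms, of 0 k c] by (simp add: cf_def)

lemma cf_monom: "cf (\<lambda>z. c * z ^ n) k = (if k = n then c else 0)"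
proof -
  have "(\<lambda>z. c * z ^ n) has_fps_expansion fps_const c * fps_X ^ n"
    by (intro has_fps_expansion_cmult_left has_fps_expansion_fps_X_power)
  then have "fps_nth (fps_const c * fps_X ^ n) k = (deriv ^^ k) (\<lambda>z. c * z ^ n) 0 / fact k"
    by (rule fps_nth_fps_expansion)
  then show ?thesis by (cases "k = n") (simp_all add: cf_def)
qed

lemma cf_const: "cf (\<lambda>z. c) k = (if k = 0 then c else 0)"
  by (simp add: cf_def)

lemma cf_zero: "cf h 0 = h 0"
  by (simp add: cf_def)

lemma higher_deriv_sum_ball:
  fixes m :: nat and h :: "nat \<Rightarrow> complex \<Rightarrow> complex"
  assumes "\<And>j. j < m \<Longrightarrow> h j holomorphic_on ball 0 1"
  shows "(deriv ^^ k) (\<lambda>z. \<Sum>j<m. h j z) 0 = (\<Sum>j<m. (deriv ^^ k) (h j) 0)"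
  using assms
proof (induction m)
  case 0
  then show ?case by simp
next
  case (Suc m)
  have "(deriv ^^ k) (\<lambda>z. \<Sum>j<Suc m. h j z) 0 = (deriv ^^ k) (\<lambda>z. (\<Sum>j<m. h j z) + h m z) 0"
    by simp
  also have "\<dots> = (deriv ^^ k) (\<lambda>z. \<Sum>j<m. h j z) 0 + (deriv ^^ k) (h m) 0"
    by (rule higher_deriv_add[of _ "ball 0 1"]) (use Suc.prems in \<open>auto intro!: holomorphic_intros\<close>)
  also have "\<dots> = (\<Sum>j<Suc m. (deriv ^^ k) (h j) 0)"
    using Suc by simp
  finally show ?case .
qed

lemma mobius_ineq:
  fixes w A :: complex and d :: real
  assumes w: "cmod w \<le> d" and A: "cmod A < d"
  shows "d * cmod (w - A) \<le> cmod (complex_of_real (d^2) - cnj A * w)"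
proof -
  obtain a b where wab: "w = Complex a b" by (cases w)
  obtain p q where Apq: "A = Complex p q" by (cases A)
  have w2: "a^2 + b^2 \<le> d^2"
    using w by (simp add: wab cmod_def) (metis abs_of_nonneg norm_ge_zero real_sqrt_le_iff sqrt_le_D abs_le_square_iff real_sqrt_abs)
  have A2: "p^2 + q^2 \<le> d^2"
    using A by (simp add: Apq cmod_def) (metis less_imp_le abs_of_nonneg real_sqrt_le_iff sqrt_le_D abs_le_square_iff real_sqrt_abs norm_ge_zero)
  have d0: "0 \<le> d" using A by (meson le_less_trans norm_ge_zero less_imp_le)
  have key: "(d * cmod (w - A))^2 \<le> (cmod (complex_of_real (d^2) - cnj A * w))^2"
  proof -
    have e1: "(d * cmod (w - A))^2 = d^2 * ((a - p)^2 + (b - q)^2)"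
      by (simp add: power_mult_distrib cmod_power2 wab Apq)
    have e2: "(cmod (complex_of_real (d^2) - cnj A * w))^2 = (d^2 - (p*a + q*b))^2 + (q*a - p*b)^2"
      by (simp add: cmod_power2 wab Apq algebra_simps)
    have "(cmod (complex_of_real (d^2) - cnj A * w))^2 - (d * cmod (w - A))^2
        = (d^2 - (a^2 + b^2)) * (d^2 - (p^2 + q^2))"
      unfolding e1 e2 by (simp add: algebra_simps power2_eq_square)
    also have "\<dots> \<ge> 0" using w2 A2 by (intro mult_nonneg_nonneg) auto
    finally show ?thesis by simp
  qed
  show ?thesis
    by (rule power2_le_imp_le[OF key]) simp
qed

lemma cf_eq_0_iff: "cf h j = 0 \<longleftrightarrow> (deriv ^^ j) h 0 = 0"
  by (simp add: cf_def)

lemma wiener: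
  assumes hol: "\<phi> holomorphic_on ball 0 1" and d: "0 < d"
    and bd: "\<And>z. z \<in> ball 0 1 \<Longrightarrow> cmod (\<phi> z) \<le> d"
    and N: "1 \<le> N" and zero: "\<And>j. 0 < j \<Longrightarrow> j < N \<Longrightarrow> cf \<phi> j = 0"
  shows "cmod (cf \<phi> N) \<le> (d^2 - cmod (\<phi> 0)^2) / d"
proof (cases "cmod (\<phi> 0) = d")
  case True
  have const: "\<And>z. z \<in> ball 0 1 \<Longrightarrow> \<phi> z = \<phi> 0"
    by (rule max_mod_const[OF hol]) (use bd True in auto)
  have "(deriv ^^ N) \<phi> 0 = (deriv ^^ N) (\<lambda>z. \<phi> 0) 0"
    by (rule higher_deriv_transform_within_open[OF hol]) (auto intro: const)
  then have "cf \<phi> N = 0" using N by (simp add: cf_def)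
  then show ?thesis using True by simp
next
  case False
  define A where "A = \<phi> 0"
  have Ad: "cmod A < d" using bd[of 0] False by (simp add: A_def)
  define \<psi> where "\<psi> = (\<lambda>z. \<phi> z - A)"
  have hol\<psi>: "\<psi> holomorphic_on ball 0 1" unfolding \<psi>_def by (intro holomorphic_intros hol)
  have cf\<psi>: "cf \<psi> j = cf \<phi> j - (if j = 0 then A else 0)" for j
    unfolding \<psi>_def by (subst cf_diff[OF hol]) (auto simp: cf_const)
  have "(deriv ^^ j) \<psi> 0 = 0" if "j < N" for j
  proof (cases "j = 0")
    case True then show ?thesis by (simp add: \<psi>_def A_def)
  next
    case False
    then have "cf \<psi> j = 0" using cf\<psi>[of j] zero[of j] that by simp
    then show ?thesis by (simp add: cf_eq_0_iff)
  qed
  then obtain \<rho> where hol\<rho>: "\<rho> holomorphic_on ball 0 1"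
      and fac: "\<forall>z\<in>ball 0 1. \<psi> z = z ^ N * \<rho> z" and cf\<rho>: "\<forall>j. cf \<rho> j = cf \<psi> (j + N)"
    using factor_lemma[OF hol\<psi>] by blast
  have \<rho>0: "\<rho> 0 = cf \<phi> N"
    using cf\<rho>[rule_format, of 0] cf\<psi>[of N] N by (simp add: cf_zero)
  have den: "complex_of_real (d^2) - cnj A * \<phi> z \<noteq> 0" if "z \<in> ball 0 1" for z
  proof
    assume "complex_of_real (d^2) - cnj A * \<phi> z = 0"
    then have "cnj A * \<phi> z = complex_of_real (d^2)" by simp
    then have "cmod (cnj A * \<phi> z) = d^2" by (simp add: norm_power)
    moreover have "cmod (cnj A * \<phi> z) < d^2"
    proof -
      have "cmod (cnj A * \<phi> z) = cmod A * cmod (\<phi> z)" by (simp add: norm_mult)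
      also have "\<dots> \<le> cmod A * d" using bd[OF that] by (simp add: mult_left_mono)
      also have "\<dots> < d * d" using Ad d by simp
      finally show ?thesis by (simp add: power2_eq_square)
    qed
    ultimately show False by simp
  qed
  define \<sigma> where "\<sigma> = (\<lambda>z. complex_of_real d * \<rho> z / (complex_of_real (d^2) - cnj A * \<phi> z))"
  have hol\<sigma>: "\<sigma> holomorphic_on ball 0 1"
    unfolding \<sigma>_def using den by (intro holomorphic_intros hol hol\<rho>) auto
  have bd\<sigma>: "cmod (z ^ N * \<sigma> z) \<le> 1" if z: "z \<in> ball 0 1" for z
  proof -
    have "z ^ N * \<sigma> z = complex_of_real d * (\<phi> z - A) / (complex_of_real (d^2) - cnj A * \<phi> z)"
      using fac z by (simp add: \<sigma>_def \<psi>_def)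
    then have "cmod (z ^ N * \<sigma> z) = d * cmod (\<phi> z - A) / cmod (complex_of_real (d^2) - cnj A * \<phi> z)"
      using d by (simp add: norm_divide norm_mult)
    also have "\<dots> \<le> 1"
      using mobius_ineq[OF bd[OF z] Ad] den[OF z] by (simp add: divide_le_eq_1)
    finally show ?thesis .
  qed
  have le1: "cmod (\<sigma> 0) \<le> 1"
    by (rule schwarz_gen[OF hol\<sigma> bd\<sigma>]) auto
  have s0: "\<sigma> 0 = complex_of_real d * cf \<phi> N / complex_of_real (d^2 - cmod A ^ 2)"
  proof -
    have "cnj A * A = complex_of_real (cmod A ^ 2)"
      by (metis complex_norm_square mult.commute of_real_power)
    then show ?thesis by (simp add: \<sigma>_def \<rho>0 A_def[symmetric])
  qed
  have "cmod A ^ 2 < d^2" by (rule power_strict_mono) (use Ad in auto)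
  then have pos: "d^2 - cmod A ^ 2 > 0" by simp
  have "cmod (\<sigma> 0) = d * cmod (cf \<phi> N) / (d^2 - cmod A ^ 2)"
    unfolding s0 norm_divide norm_mult norm_of_real using d pos by (simp add: abs_of_pos)
  then have "d * cmod (cf \<phi> N) / (d^2 - cmod A ^ 2) \<le> 1" using le1 by simp
  then have "d * cmod (cf \<phi> N) \<le> d^2 - cmod A ^ 2"
    using \<open>d^2 - cmod A ^ 2 > 0\<close> by (simp add: divide_le_eq)
  then show ?thesis using d by (simp add: A_def le_divide_eq mult.commute)
qed

lemma cf_sum:
  fixes m :: nat and h :: "nat \<Rightarrow> complex \<Rightarrow> complex"
  assumes "\<And>j. j < m \<Longrightarrow> h j holomorphic_on ball 0 1"
  shows "cf (\<lambda>z. \<Sum>j<m. h j z) k = (\<Sum>j<m. cf (h j) k)"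
  using higher_deriv_sum_ball[of m h k, OF assms] by (simp add: cf_def sum_divide_distrib)

lemma root_unity_ne1:
  assumes "0 < k" "k < n"
  shows "cis (2 * pi / real n) ^ k \<noteq> 1"
proof
  assume "cis (2 * pi / real n) ^ k = 1"
  moreover have "cis (real k * (2 * pi / real n)) = cis (2 * pi / real n) ^ k"
    by (rule Complex.DeMoivre[symmetric])
  ultimately have "cis (real k * (2 * pi / real n)) = 1" by simp
  then have "cos (real k * (2 * pi / real n)) = 1" by (metis cis.sel(1) one_complex.sel(1))
  then obtain m :: int where m: "real k * (2 * pi / real n) = of_int m * 2 * pi"
    by (auto simp: cos_one_2pi_int)
  have n0: "real n > 0" using assms by simp
  from m have "real k = of_int m * real n" using n0 pi_gt_zero
    by (simp add: field_simps)
  then have km: "int k = m * int n" by (metis of_int_mult of_int_of_nat_eq of_int_eq_iff)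
  then have "0 < m * int n" using assms by linarith
  then have "m > 0" using assms by (simp add: zero_less_mult_iff)
  then have "m * int n \<ge> int n" using mult_right_mono[of 1 m "int n"] by simp
  then show False using km assms by linarith
qed

lemma averaging:
  assumes hol: "g holomorphic_on ball 0 1" and bd: "\<And>z. z \<in> ball 0 1 \<Longrightarrow> cmod (g z) \<le> d"
    and n: "1 \<le> n"
  shows "\<exists>A. A holomorphic_on ball 0 1 \<and> (\<forall>z\<in>ball 0 1. cmod (A z) \<le> d) \<and> A 0 = g 0
           \<and> cf A n = cf g n \<and> (\<forall>j. 0 < j \<and> j < n \<longrightarrow> cf A j = 0)"
proof -
  define \<zeta> where "\<zeta> = cis (2 * pi / real n)"
  have nz: "cmod (\<zeta> ^ j) = 1" for j by (simp add: \<zeta>_def norm_power)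
  define A where "A = (\<lambda>z. (1 / of_nat n) * (\<Sum>j<n. g (\<zeta> ^ j * z)))"
  have holj: "(\<lambda>z. g (\<zeta> ^ j * z)) holomorphic_on ball 0 1" for j by (rule hol_scale[OF hol nz])
  have holS: "(\<lambda>z. \<Sum>j<n. g (\<zeta> ^ j * z)) holomorphic_on ball 0 1"
    by (intro holomorphic_on_sum holj)
  have holA: "A holomorphic_on ball 0 1" unfolding A_def by (intro holomorphic_intros holS)
  have bdA: "cmod (A z) \<le> d" if z: "z \<in> ball 0 1" for z
  proof -
    have "cmod (\<Sum>j<n. g (\<zeta> ^ j * z)) \<le> (\<Sum>j<n. cmod (g (\<zeta> ^ j * z)))" by (rule norm_sum)
    also have "\<dots> \<le> (\<Sum>j<n. d)"
      by (intro sum_mono bd) (use z nz in \<open>simp add: norm_mult\<close>)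
    also have "\<dots> = real n * d" by simp
    finally have "cmod (\<Sum>j<n. g (\<zeta> ^ j * z)) \<le> real n * d" .
    then show ?thesis using n by (simp add: A_def norm_mult norm_divide field_simps)
  qed
  have A0: "A 0 = g 0" using n by (simp add: A_def)
  have cfA: "cf A k = (1 / of_nat n) * (\<Sum>j<n. (\<zeta> ^ k) ^ j) * cf g k" for k
  proof -
    have "cf A k = (1 / of_nat n) * cf (\<lambda>z. \<Sum>j<n. g (\<zeta> ^ j * z)) k"
      unfolding A_def by (rule cf_cmult[OF holS])
    also have "cf (\<lambda>z. \<Sum>j<n. g (\<zeta> ^ j * z)) k = (\<Sum>j<n. cf (\<lambda>z. g (\<zeta> ^ j * z)) k)"
      by (rule cf_sum) (rule holj)
    also have "\<dots> = (\<Sum>j<n. (\<zeta> ^ k) ^ j * cf g k)"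
      by (intro sum.cong refl, subst cf_scale[OF hol nz]) (simp add: power_mult[symmetric] mult.commute)
    finally show ?thesis by (simp add: sum_distrib_right mult.assoc)
  qed
  have zn: "\<zeta> ^ n = 1"
  proof -
    have "\<zeta> ^ n = cis (real n * (2 * pi / real n))" unfolding \<zeta>_def by (rule Complex.DeMoivre)
    also have "\<dots> = 1" using n by simp
    finally show ?thesis .
  qed
  show ?thesis
  proof (intro exI conjI ballI allI impI)
    show "A holomorphic_on ball 0 1" by (rule holA)
    show "\<And>z. z \<in> ball 0 1 \<Longrightarrow> cmod (A z) \<le> d" by (rule bdA)
    show "A 0 = g 0" by (rule A0)
    show "cf A n = cf g n" unfolding cfA zn using n by simp
    fix j assume j: "0 < j \<and> j < n"
    have ne: "\<zeta> ^ j \<noteq> 1" unfolding \<zeta>_def using j by (intro root_unity_ne1) auto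
    have "(\<zeta> ^ j) ^ n = 1" by (metis power_mult mult.commute zn power_one)
    then have "(\<Sum>i<n. (\<zeta> ^ j) ^ i) = 0" using ne by (simp add: geometric_sum)
    then show "cf A j = 0" unfolding cfA by simp
  qed
qed

lemma extremal:
  assumes "g holomorphic_on ball 0 1" "\<And>z. z \<in> ball 0 1 \<Longrightarrow> cmod (g z) \<le> d"
    "cmod (cf g n) = d"
  shows "\<forall>z\<in>ball 0 1. g z = cf g n * z ^ n"
  using assms
proof (induction n arbitrary: g)
  case 0
  have c: "\<And>z. z \<in> ball 0 1 \<Longrightarrow> g z = g 0"
    by (rule max_mod_const[OF 0(1)]) (use 0 in \<open>auto simp: cf_zero\<close>)
  show ?case
  proof
    fix z :: complex assume "z \<in> ball 0 1"
    from c[OF this] show "g z = cf g 0 * z ^ 0" by (simp add: cf_zero)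
  qed
next
  case (Suc m)
  note hol = Suc.prems(1) and bd = Suc.prems(2) and eq = Suc.prems(3)
  have d0: "0 \<le> d" using eq by (metis norm_ge_zero)
  show ?case
  proof (cases "d = 0")
    case True
    then have "\<And>z. z \<in> ball 0 1 \<Longrightarrow> g z = 0" using bd by fastforce
    moreover have "cf g (Suc m) = 0" using eq True by simp
    ultimately show ?thesis by simp
  next
    case False
    then have d: "0 < d" using d0 by simp
    obtain A where holA: "A holomorphic_on ball 0 1" and bdA: "\<forall>z\<in>ball 0 1. cmod (A z) \<le> d"
      and A0: "A 0 = g 0" and An: "cf A (Suc m) = cf g (Suc m)"
      and Aj: "\<forall>j. 0 < j \<and> j < Suc m \<longrightarrow> cf A j = 0"
      using averaging[OF hol bd, of "Suc m"] by auto
    have "cmod (cf A (Suc m)) \<le> (d^2 - cmod (A 0)^2) / d"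
      by (rule wiener[OF holA d]) (use bdA Aj in auto)
    then have "d \<le> (d^2 - cmod (g 0)^2) / d" using An A0 eq by simp
    then have "d * d \<le> d^2 - cmod (g 0)^2" using d by (simp add: le_divide_eq mult.commute)
    then have "cmod (g 0)^2 \<le> 0" by (simp add: power2_eq_square)
    then have g0: "g 0 = 0" by simp
    have "(deriv ^^ j) g 0 = 0" if "j < 1" for j using that g0 by simp
    then obtain \<rho> where hol\<rho>: "\<rho> holomorphic_on ball 0 1"
      and fac: "\<forall>z\<in>ball 0 1. g z = z ^ 1 * \<rho> z" and cf\<rho>: "\<forall>j. cf \<rho> j = cf g (j + 1)"
      using factor_lemma[OF hol, of 1] by blast
    have bd\<rho>: "cmod (\<rho> z) \<le> d" if "z \<in> ball 0 1" for z
      by (rule schwarz_gen[OF hol\<rho> _ that, of 1]) (use fac bd in auto)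
    have "cmod (cf \<rho> m) = d" using cf\<rho> eq by simp
    then have "\<forall>z\<in>ball 0 1. \<rho> z = cf \<rho> m * z ^ m"
      using Suc.IH[OF hol\<rho> bd\<rho>] by blast
    then show ?thesis using fac cf\<rho> by (simp add: mult_ac)
  qed
qed

lemma cf_bound:
  assumes "h holomorphic_on ball 0 1" "\<And>z. z \<in> ball 0 1 \<Longrightarrow> cmod (h z) \<le> M"
  shows "cmod (cf h k) \<le> M"
  using cauchy_bound[OF assms, of k] by (simp add: cf_def norm_divide field_simps)

lemma cf_add:
  assumes "f holomorphic_on ball 0 1" "g holomorphic_on ball 0 1"
  shows "cf (\<lambda>z. f z + g z) k = cf f k + cf g k"
  using higher_deriv_add[OF assms, of 0 k] by (simp add: cf_def add_divide_distrib)

lemma cf_transform: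
  assumes "f holomorphic_on ball 0 1" "g holomorphic_on ball 0 1" "\<And>z. z \<in> ball 0 1 \<Longrightarrow> f z = g z"
  shows "cf f k = cf g k"
proof -
  have "(deriv ^^ k) f 0 = (deriv ^^ k) g 0"
    by (rule higher_deriv_transform_within_open[OF assms(1,2)]) (auto intro: assms(3))
  then show ?thesis by (simp add: cf_def)
qed

lemma cis_minus_1: "cmod (cis t - 1) = 2 * \<bar>sin ((t::real) / 2)\<bar>"
proof (rule power2_eq_imp_eq)
  have "cmod (cis t - 1)^2 = (cos t - 1)^2 + (sin t)^2" by (simp add: cmod_power2)
  also have "\<dots> = 2 - 2 * cos t" using sin_cos_squared_add[of t] by (simp add: power2_eq_square algebra_simps)
  also have "cos t = 1 - 2 * sin (t/2) ^ 2" using cos_double_sin[of "t/2"] by simp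
  finally show "cmod (cis t - 1)^2 = (2 * \<bar>sin (t / 2)\<bar>)^2" by (simp add: power_mult_distrib)
qed auto

lemma cis_plus_1_sq: "cmod (cis t + 1)^2 = 2 + 2 * cos t"
proof -
  have "cmod (cis t + 1)^2 = (cos t + 1)^2 + (sin t)^2" by (simp add: cmod_power2)
  also have "\<dots> = 2 + 2 * cos t" using sin_cos_squared_add[of t] by (simp add: power2_eq_square algebra_simps)
  finally show ?thesis .
qed

lemma one_minus_cos_le: "1 - cos t \<le> (t::real)^2 / 2"
proof -
  have "cos t = 1 - 2 * sin (t/2) ^ 2" using cos_double_sin[of "t/2"] by simp
  moreover have "sin (t/2) ^ 2 \<le> (t/2)^2"
    using abs_sin_x_le_abs_x[of "t/2"] by (metis abs_ge_zero power2_abs power_mono)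
  ultimately show ?thesis by (simp add: power_divide)
qed

lemma lim_zero:
  fixes x c :: real and k :: nat
  assumes k: "0 < k" and x: "0 \<le> x" and le: "\<And>\<delta>. 0 < \<delta> \<Longrightarrow> 2 * \<bar>sin (real k * \<delta> / 2)\<bar> * x \<le> c * \<delta>^2"
  shows "x = 0"
proof -
  have D: "((\<lambda>h. sin (real k * h / 2)) has_real_derivative (real k / 2)) (at 0)"
    by (auto intro!: derivative_eq_intros)
  then have "((\<lambda>h. sin (real k * h / 2) / h) \<longlongrightarrow> real k / 2) (at 0)"
    by (simp add: DERIV_def)
  then have L: "((\<lambda>h. sin (real k * h / 2) / h) \<longlongrightarrow> real k / 2) (at_right 0)"
    by (rule tendsto_mono[OF at_le[OF subset_UNIV]])
  have L2: "((\<lambda>h. 2 * \<bar>sin (real k * h / 2) / h\<bar> * x) \<longlongrightarrow> 2 * \<bar>real k / 2\<bar> * x) (at_right 0)"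
    by (intro tendsto_intros L)
  have R: "((\<lambda>h. c * h) \<longlongrightarrow> c * 0) (at_right (0::real))"
    by (intro tendsto_intros)
  have ev: "eventually (\<lambda>h. 2 * \<bar>sin (real k * h / 2) / h\<bar> * x \<le> c * h) (at_right 0)"
    using eventually_at_right_less[of "0::real"]
  proof eventually_elim
    case (elim h)
    have "2 * \<bar>sin (real k * h / 2) / h\<bar> * x = (2 * \<bar>sin (real k * h / 2)\<bar> * x) / h"
      using elim by (simp add: abs_divide)
    also have "\<dots> \<le> (c * h^2) / h" using le[OF elim] elim by (intro divide_right_mono) auto
    also have "\<dots> = c * h" using elim by (simp add: power2_eq_square)
    finally show ?case .
  qed
  have "2 * \<bar>real k / 2\<bar> * x \<le> c * 0"
    by (rule tendsto_le[OF _ R L2 ev]) simp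
  then have "real k * x \<le> 0" by simp
  then show ?thesis using k x by (simp add: mult_le_0_iff)
qed

lemma omega_pow_gt:
  assumes n: "1 \<le> n" and k: "1 \<le> k" and eq: "cis (pi / real n) ^ k = 1"
  shows "n < k"
proof -
  have "cis (real k * (pi / real n)) = cis (pi / real n) ^ k" by (rule Complex.DeMoivre[symmetric])
  with eq have "cis (real k * (pi / real n)) = 1" by simp
  then have "cos (real k * (pi / real n)) = 1" by (metis cis.sel(1) one_complex.sel(1))
  then obtain m :: int where m: "real k * (pi / real n) = of_int m * 2 * pi"
    by (auto simp: cos_one_2pi_int)
  have n0: "real n > 0" using n by simp
  from m have "real k = 2 * of_int m * real n" using n0 pi_gt_zero
    by (simp add: field_simps)
  then have km: "int k = 2 * m * int n" by (metis of_int_mult of_int_of_nat_eq of_int_eq_iff of_int_numeral)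
  then have "0 < 2 * m * int n" using k by linarith
  then have "m > 0" using n by (simp add: zero_less_mult_iff)
  then have "2 * m * int n \<ge> 2 * int n" using mult_right_mono[of 1 m "2 * int n"] by (simp add: mult_ac)
  then show ?thesis using km n by linarith
qed

lemma diam_ge:
  assumes "z \<in> E" "w \<in> E"
  shows "ereal (cmod (z - w)) \<le> Diam E"
  unfolding Diam_def by (rule SUP_upper2[OF assms(1)], rule SUP_upper[OF assms(2)])

theorem theorem7:
  fixes f :: "complex \<Rightarrow> complex" and n :: nat
  assumes "f analytic_on ball 0 1" and "n \<ge> 1"
  shows "ereal (cmod ((deriv ^^ n) f 0) / fact n) \<le> Diam (f ` ball 0 1) / 2
       \<and> (ereal (cmod ((deriv ^^ n) f 0) / fact n) = Diam (f ` ball 0 1) / 2 \<longleftrightarrow>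
           (\<exists>c. (\<forall>z\<in>ball 0 1. f z = f 0 + c * z ^ n) \<and> ereal (cmod c) = Diam (f ` ball 0 1) / 2))"
proof -
  have hol: "f holomorphic_on ball 0 1" using assms(1) by (simp add: analytic_on_open)
  have n1: "1 \<le> n" by fact
  define a where "a = cf f n"
  have lhs: "cmod ((deriv ^^ n) f 0) / fact n = cmod a" by (simp add: a_def cf_def norm_divide)
  define \<omega> where "\<omega> = cis (pi / real n)"
  have n\<omega>: "cmod \<omega> = 1" by (simp add: \<omega>_def)
  have \<omega>n: "\<omega> ^ n = -1"
  proof -
    have "\<omega> ^ n = cis (real n * (pi / real n))" unfolding \<omega>_def by (rule Complex.DeMoivre)
    also have "\<dots> = -1" using n1 by simp
    finally show ?thesis .
  qed
  define g where "g = (\<lambda>z. f z - f (\<omega> * z))"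
  have hol\<omega>: "(\<lambda>z. f (\<omega> * z)) holomorphic_on ball 0 1" by (rule hol_scale[OF hol n\<omega>])
  have holg: "g holomorphic_on ball 0 1" unfolding g_def by (intro holomorphic_intros hol hol\<omega>)
  have cfg: "cf g k = (1 - \<omega> ^ k) * cf f k" for k
    unfolding g_def cf_diff[OF hol hol\<omega>] cf_scale[OF hol n\<omega>] by (simp add: algebra_simps)
  have cfgn: "cf g n = 2 * a" using cfg[of n] \<omega>n by (simp add: a_def)
  have nonneg: "0 \<le> Diam (f ` ball 0 1)"
    using diam_ge[of "f 0" "f ` ball 0 1" "f 0"] by (simp add: zero_ereal_def)
  consider (inf) "Diam (f ` ball 0 1) = \<infinity>" | (fin) d where "Diam (f ` ball 0 1) = ereal d" "0 \<le> d"
    using nonneg by (cases "Diam (f ` ball 0 1)") auto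
  then show ?thesis
  proof cases
    case inf
    then have "Diam (f ` ball 0 1) / 2 = \<infinity>" by simp
    then show ?thesis by simp
  next
    case fin
    have Dh: "Diam (f ` ball 0 1) / 2 = ereal (d / 2)" using fin by simp
    have bdf: "cmod (f z - f w) \<le> d" if "z \<in> ball 0 1" "w \<in> ball 0 1" for z w
      using diam_ge[of "f z" "f ` ball 0 1" "f w"] that fin by simp
    have sc: "u * z \<in> ball 0 1" if "cmod u = 1" "z \<in> ball 0 1" for u z
      using that by (simp add: norm_mult)
    have bdg: "cmod (g z) \<le> d" if "z \<in> ball 0 1" for z
      unfolding g_def using bdf[OF that sc[OF n\<omega> that]] .
    have ineq: "cmod a \<le> d / 2"
      using cf_bound[OF holg bdg, of n] cfgn by (simp add: norm_mult)
    have iff: "cmod a = d / 2 \<longleftrightarrow> (\<exists>c. (\<forall>z\<in>ball 0 1. f z = f 0 + c * z ^ n) \<and> cmod c = d / 2)"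
    proof
      assume ad: "cmod a = d / 2"
      have rep: "f z = f 0 + a * z ^ n" if z: "z \<in> ball 0 1" for z
      proof (cases "d = 0")
        case True
        then have "a = 0" using ad by simp
        moreover have "f z = f 0" using bdf[OF z, of 0] True by simp
        ultimately show ?thesis by simp
      next
        case False
        then have d: "0 < d" using fin by simp
        have "cmod (cf g n) = d" using cfgn ad by (simp add: norm_mult)
        then have gE: "\<forall>z\<in>ball 0 1. g z = cf g n * z ^ n" using extremal[OF holg bdg] by blast
        have cfg0: "cf g k = 0" if "k \<noteq> n" for k
        proof -
          have "cf g k = cf (\<lambda>z. cf g n * z ^ n) k"
            by (rule cf_transform[OF holg]) (use gE in \<open>auto intro!: holomorphic_intros\<close>)
          then show ?thesis using that by (simp add: cf_monom)
        qed
        have main: "cf f k = 0" if "1 \<le> k" "k \<noteq> n" for k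
          using that
        proof (induction k rule: less_induct)
          case (less k)
          note IH = less.IH
          show ?case
          proof (cases "\<omega> ^ k = 1")
            case False
            then show ?thesis using cfg0[OF less.prems(2)] cfg[of k] by simp
          next
            case True
            have nk: "n < k" using omega_pow_gt[OF n1 less.prems(1)] True by (simp add: \<omega>_def)
            have key: "2 * \<bar>sin (real k * \<delta> / 2)\<bar> * cmod (cf f k) \<le> (d * (real n)^2 / 4) * \<delta>^2"
              if \<delta>: "0 < \<delta>" for \<delta>
            proof -
              define u where "u = cis \<delta>"
              have nu: "cmod u = 1" by (simp add: u_def)
              have holu: "(\<lambda>z. f (u * z)) holomorphic_on ball 0 1" by (rule hol_scale[OF hol nu])
              define \<Psi> where "\<Psi> = (\<lambda>z. f (u * z) - f (\<omega> * z))"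
              have hol\<Psi>: "\<Psi> holomorphic_on ball 0 1" unfolding \<Psi>_def by (intro holomorphic_intros holu hol\<omega>)
              have cf\<Psi>: "cf \<Psi> j = (u ^ j - \<omega> ^ j) * cf f j" for j
                unfolding \<Psi>_def cf_diff[OF holu hol\<omega>] cf_scale[OF hol nu] cf_scale[OF hol n\<omega>]
                by (simp add: algebra_simps)
              have bd\<Psi>: "cmod (\<Psi> z) \<le> d" if "z \<in> ball 0 1" for z
                unfolding \<Psi>_def using bdf[OF sc[OF nu that] sc[OF n\<omega> that]] .
              have z\<Psi>: "(deriv ^^ j) \<Psi> 0 = 0" if "j < n" for j
              proof (cases "j = 0")
                case True then show ?thesis by (simp add: \<Psi>_def)
              next
                case False
                then have "cf f j = 0" using IH[of j] that nk by simp
                then have "cf \<Psi> j = 0" by (simp add: cf\<Psi>)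
                then show ?thesis by (simp add: cf_eq_0_iff)
              qed
              obtain \<Phi> where hol\<Phi>: "\<Phi> holomorphic_on ball 0 1"
                and fac: "\<forall>z\<in>ball 0 1. \<Psi> z = z ^ n * \<Phi> z" and cf\<Phi>: "\<forall>j. cf \<Phi> j = cf \<Psi> (j + n)"
                using factor_lemma[OF hol\<Psi> z\<Psi>] by blast
              have bd\<Phi>: "cmod (\<Phi> z) \<le> d" if "z \<in> ball 0 1" for z
                by (rule schwarz_gen[OF hol\<Phi> _ that, of n]) (use fac bd\<Psi> in auto)
              have W: "cmod (cf \<Phi> (k - n)) \<le> (d^2 - cmod (\<Phi> 0)^2) / d"
              proof (rule wiener[OF hol\<Phi> d bd\<Phi>])
                show "1 \<le> k - n" using nk by simp
                fix j assume j: "0 < j" "j < k - n"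
                have "cf f (j + n) = 0" using IH[of "j + n"] j nk by simp
                then show "cf \<Phi> j = 0" using cf\<Phi> cf\<Psi> by simp
              qed
              have e1: "cf \<Phi> (k - n) = (cis (real k * \<delta>) - 1) * cf f k"
                using cf\<Phi> cf\<Psi>[of k] True nk by (simp add: u_def Complex.DeMoivre)
              have e2: "\<Phi> 0 = (cis (real n * \<delta>) + 1) * a"
                using cf\<Phi>[rule_format, of 0] cf\<Psi>[of n] \<omega>n by (simp add: u_def Complex.DeMoivre cf_zero a_def)
              have "cmod (\<Phi> 0)^2 = (2 + 2 * cos (real n * \<delta>)) * (d / 2)^2"
                unfolding e2 norm_mult power_mult_distrib cis_plus_1_sq ad ..
              then have "(d^2 - cmod (\<Phi> 0)^2) / d = d * (1 - cos (real n * \<delta>)) / 2"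
                using d by (simp add: field_simps power2_eq_square)
              also have "\<dots> \<le> d * ((real n * \<delta>)^2 / 2) / 2"
                using one_minus_cos_le[of "real n * \<delta>"] d by (intro divide_right_mono mult_left_mono) auto
              also have "\<dots> = (d * (real n)^2 / 4) * \<delta>^2" by (simp add: power_mult_distrib field_simps)
              finally have "cmod (cf \<Phi> (k - n)) \<le> (d * (real n)^2 / 4) * \<delta>^2" using W by linarith
              then show ?thesis unfolding e1 norm_mult cis_minus_1 by simp
            qed
            have "cmod (cf f k) = 0"
              by (rule lim_zero[of k _ "d * (real n)^2 / 4"]) (use nk key in auto)
            then show ?thesis by simp
          qed
        qed
        have sums: "(\<lambda>k. fps_nth (fps_expansion f 0) k * z ^ k) sums f z"
        proof (rule has_fps_expansion_imp_sums_complex)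
          show "f has_fps_expansion fps_expansion f 0" using hol by (intro has_fps_expansion_fps_expansion) auto
          show "f holomorphic_on eball 0 (ereal 1)" using hol by simp
          show "ereal (cmod z) < ereal 1" using z by simp
        qed
        have seq: "(\<lambda>k. fps_nth (fps_expansion f 0) k * z ^ k)
            = (\<lambda>k. (if k = 0 then f 0 else 0) + (if k = n then a * z ^ n else 0))"
        proof
          fix k
          have c: "fps_nth (fps_expansion f 0) k = cf f k" by (simp add: fps_expansion_def cf_def)
          show "fps_nth (fps_expansion f 0) k * z ^ k = (if k = 0 then f 0 else 0) + (if k = n then a * z ^ n else 0)"
            unfolding c using main[of k] n1 by (cases "k = 0") (auto simp: cf_zero a_def)
        qed
        have "(\<lambda>k. (if k = 0 then f 0 else 0) + (if k = n then a * z ^ n else 0)) sums (f 0 + a * z ^ n)"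
          by (intro sums_add sums_single)
        with sums seq show ?thesis using sums_unique2 by metis
      qed
      show "\<exists>c. (\<forall>z\<in>ball 0 1. f z = f 0 + c * z ^ n) \<and> cmod c = d / 2"
        using rep ad by blast
    next
      assume "\<exists>c. (\<forall>z\<in>ball 0 1. f z = f 0 + c * z ^ n) \<and> cmod c = d / 2"
      then obtain c where c: "\<forall>z\<in>ball 0 1. f z = f 0 + c * z ^ n" and cd: "cmod c = d / 2" by blast
      have holp: "(\<lambda>z. f 0 + c * z ^ n) holomorphic_on ball 0 1" by (intro holomorphic_intros)
      have "cf f n = cf (\<lambda>z. f 0 + c * z ^ n) n"
        by (rule cf_transform[OF hol holp]) (use c in blast)
      also have "\<dots> = cf (\<lambda>z. f 0) n + cf (\<lambda>z. c * z ^ n) n"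
        by (rule cf_add) (auto intro!: holomorphic_intros)
      also have "\<dots> = c" using n1 by (simp add: cf_const cf_monom)
      finally show "cmod a = d / 2" using cd by (simp add: a_def)
    qed
    show ?thesis
      unfolding lhs Dh using ineq iff by simp
  qed
qed

end
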